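(* Let lines $L_1,L_2$ of $Y_m$ intersect at a point $z$ with acute angle $\delta$, and let $x,y\in L_1$ lie on the same side of $z$. Let $r_1,r_2$ be rules with distinct orientation values, the orientations chosen so that the rules map farthest from $z$, and suppose the points $r_i(x),r_i(y)\in L_2$ and $r_i(r_j(x)),r_i(r_j(y))\in L_1$ ($i,j\in\{1,2\}$, $i\neq j$) all lie on the same side of $z$. Let $\theta_1,\theta_2\in(0,\pi/2]$ be the projection angles of $r_1,r_2$ and $c_1,c_2$ their separation coefficients. Then $0\le c_1c_2<1$ if and only if $$\frac{\pi-\delta}{2}<\frac{\theta_1+\theta_2}{2}\le\frac{\pi}{2}.$$
   Context: $Y_m\subset\mathbb{R}^2$ is a union of $m\ge3$ pairwise nonparallel, not all concurrent lines. A rule with projection angle $\theta\in(0,\pi/2]$ maps a point $x$ on one line to an intersection point with the target line of a line through $x$ meeting the target line at angle $\theta$; the orientation value selects which of the two such lines is used. For a rule with projection angle $\theta$ mapping points on one side of $z$ on one of $L_1,L_2$ to points on the same side of $z$ on the other line, with orientation chosen to map farthest from $z$, one has $d(r(x),r(y))=c\,d(x,y)$ with separation coefficient $c=\sin(\gamma)/\sin(\theta)$, $\gamma=\pi-\delta-\theta$ (by the law of sines). Thus $c_i=\sin(\pi-\delta-\theta_i)/\sin(\theta_i)$. *)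

theory Defs
  imports "HOL-Analysis.Analysis"
begin

text \<open>The plane R^2 is modelled by the complex numbers.\<close>

definition line :: "complex \<Rightarrow> complex \<Rightarrow> complex set" where
  "line a u = {a + of_real t * u | t. True}"

definition is_line :: "complex set \<Rightarrow> bool" where
  "is_line L \<longleftrightarrow> (\<exists>a u. u \<noteq> 0 \<and> L = line a u)"

text \<open>A finite union of m \<ge> 3 pairwise nonparallel, not all concurrent lines
  (given by its set of lines).\<close>
definition line_config :: "complex set set \<Rightarrow> bool" where
  "line_config Y \<longleftrightarrow> finite Y \<and> card Y \<ge> 3 \<and> (\<forall>L\<in>Y. is_line L) \<and>
     (\<forall>L\<in>Y. \<forall>L'\<in>Y. L \<noteq> L' \<longrightarrow> (\<exists>!p. p \<in> L \<and> p \<in> L')) \<and>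
     \<not> (\<exists>p. \<forall>L\<in>Y. p \<in> L)"

definition same_side :: "complex \<Rightarrow> complex \<Rightarrow> complex \<Rightarrow> bool" where
  "same_side z p q \<longleftrightarrow> p \<noteq> z \<and> q \<noteq> z \<and> (\<exists>k>0. q - z = of_real k * (p - z))"

definition meets_at_angle :: "real \<Rightarrow> complex \<Rightarrow> complex \<Rightarrow> complex \<Rightarrow> complex \<Rightarrow> bool" where
  "meets_at_angle \<theta> a u p q \<longleftrightarrow> q \<in> line a u \<and> q \<noteq> p \<and>
     \<bar>Re ((q - p) * cnj u)\<bar> = cmod (q - p) * cmod u * cos \<theta>"

definition maps_farthest :: "real \<Rightarrow> complex \<Rightarrow> complex \<Rightarrow> complex \<Rightarrow> (complex \<Rightarrow> complex) \<Rightarrow> complex \<Rightarrow> bool" where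
  "maps_farthest \<theta> z a u r p \<longleftrightarrow> meets_at_angle \<theta> a u p (r p) \<and>
     (\<forall>q. meets_at_angle \<theta> a u p q \<longrightarrow> cmod (q - z) \<le> cmod (r p - z))"

definition sep_coeff :: "real \<Rightarrow> real \<Rightarrow> real" where
  "sep_coeff \<delta> \<theta> = sin (pi - \<delta> - \<theta>) / sin \<theta>"

end

theory Submission
  imports Defs
begin

theorem lemma1:
  fixes Y :: "complex set set" and z u1 u2 x y :: complex
    and \<delta> \<theta>1 \<theta>2 :: real and r1 r2 :: "complex \<Rightarrow> complex" and o1 o2 :: int
  assumes Y: "line_config Y"
    and L12: "line z u1 \<in> Y" "line z u2 \<in> Y" "line z u1 \<noteq> line z u2"
    and u: "u1 \<noteq> 0" "u2 \<noteq> 0"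
    and delta: "0 < \<delta>" "\<delta> < pi / 2"
      "cos \<delta> = \<bar>Re (u1 * cnj u2)\<bar> / (cmod u1 * cmod u2)"
    and xy: "x \<in> line z u1" "y \<in> line z u1" "same_side z x y"
    and theta: "0 < \<theta>1" "\<theta>1 \<le> pi / 2" "0 < \<theta>2" "\<theta>2 \<le> pi / 2"
    and orient: "o1 \<in> {-1, 1}" "o2 \<in> {-1, 1}" "o1 \<noteq> o2"
    and far1: "maps_farthest \<theta>1 z z u2 r1 x" "maps_farthest \<theta>1 z z u2 r1 y"
              "maps_farthest \<theta>1 z z u1 r1 (r2 x)" "maps_farthest \<theta>1 z z u1 r1 (r2 y)"
    and far2: "maps_farthest \<theta>2 z z u2 r2 x" "maps_farthest \<theta>2 z z u2 r2 y"
              "maps_farthest \<theta>2 z z u1 r2 (r1 x)" "maps_farthest \<theta>2 z z u1 r2 (r1 y)"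
    and side2: "\<forall>p\<in>{r1 x, r1 y, r2 x, r2 y}. \<forall>q\<in>{r1 x, r1 y, r2 x, r2 y}. same_side z p q"
    and side1: "\<forall>p\<in>{r1 (r2 x), r1 (r2 y), r2 (r1 x), r2 (r1 y)}.
                  \<forall>q\<in>{r1 (r2 x), r1 (r2 y), r2 (r1 x), r2 (r1 y)}. same_side z p q"
  shows "(0 \<le> sep_coeff \<delta> \<theta>1 * sep_coeff \<delta> \<theta>2 \<and> sep_coeff \<delta> \<theta>1 * sep_coeff \<delta> \<theta>2 < 1)
         \<longleftrightarrow> ((pi - \<delta>) / 2 < (\<theta>1 + \<theta>2) / 2 \<and> (\<theta>1 + \<theta>2) / 2 \<le> pi / 2)"
proof -
  let ?S = "\<theta>1 + \<theta>2"
  have s1: "sin \<theta>1 > 0" "sin \<theta>2 > 0" using theta by (auto intro!: sin_gt_zero)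
  have e1: "sin (pi - \<delta> - \<theta>1) = sin (\<delta> + \<theta>1)" "sin (pi - \<delta> - \<theta>2) = sin (\<delta> + \<theta>2)"
    by (simp_all add: sin_diff algebra_simps sin_add)
  have p1: "sin (\<delta> + \<theta>1) > 0" "sin (\<delta> + \<theta>2) > 0" using theta delta by (auto intro!: sin_gt_zero)
  have c: "sep_coeff \<delta> \<theta>1 * sep_coeff \<delta> \<theta>2 = sin (\<delta> + \<theta>1) * sin (\<delta> + \<theta>2) / (sin \<theta>1 * sin \<theta>2)"
    unfolding sep_coeff_def e1 by simp
  have nn: "0 \<le> sep_coeff \<delta> \<theta>1 * sep_coeff \<delta> \<theta>2" unfolding c using s1 p1 by simp
  have id: "sin (\<delta> + \<theta>1) * sin (\<delta> + \<theta>2) - sin \<theta>1 * sin \<theta>2 = sin \<delta> * sin (\<delta> + ?S)"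
  proof -
    have "sin (\<delta> + ?S) = sin \<delta> * (cos \<theta>1 * cos \<theta>2 - sin \<theta>1 * sin \<theta>2) + cos \<delta> * (sin \<theta>1 * cos \<theta>2 + cos \<theta>1 * sin \<theta>2)"
      by (simp add: sin_add cos_add)
    moreover have "sin \<delta> * sin \<delta> = 1 - cos \<delta> * cos \<delta>"
      using sin_cos_squared_add[of \<delta>] by (simp add: power2_eq_square)
    moreover have "sin (\<delta> + \<theta>1) * sin (\<delta> + \<theta>2) = (sin \<delta> * cos \<theta>1 + cos \<delta> * sin \<theta>1) * (sin \<delta> * cos \<theta>2 + cos \<delta> * sin \<theta>2)"
      by (simp add: sin_add)
    ultimately show ?thesis by algebra
  qed
  have sd: "sin \<delta> > 0" using delta by (auto intro!: sin_gt_zero)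
  have lt: "sep_coeff \<delta> \<theta>1 * sep_coeff \<delta> \<theta>2 < 1 \<longleftrightarrow> sin (\<delta> + ?S) < 0"
  proof -
    have "sep_coeff \<delta> \<theta>1 * sep_coeff \<delta> \<theta>2 < 1 \<longleftrightarrow> sin (\<delta> + \<theta>1) * sin (\<delta> + \<theta>2) < sin \<theta>1 * sin \<theta>2"
      unfolding c using s1 by (simp add: divide_less_eq)
    also have "\<dots> \<longleftrightarrow> sin \<delta> * sin (\<delta> + ?S) < 0" using id by linarith
    also have "\<dots> \<longleftrightarrow> sin (\<delta> + ?S) < 0" using sd by (simp add: mult_less_0_iff)
    finally show ?thesis .
  qed
  have sg: "sin (\<delta> + ?S) < 0 \<longleftrightarrow> pi < \<delta> + ?S"
  proof
    assume "sin (\<delta> + ?S) < 0"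
    moreover have "\<delta> + ?S \<le> pi \<Longrightarrow> sin (\<delta> + ?S) \<ge> 0" using delta theta by (intro sin_ge_zero) auto
    ultimately show "pi < \<delta> + ?S" by linarith
  next
    assume a: "pi < \<delta> + ?S"
    have "sin (\<delta> + ?S - pi) > 0" using a delta theta by (intro sin_gt_zero) auto
    moreover have "sin (\<delta> + ?S - pi) = - sin (\<delta> + ?S)" by (simp add: sin_diff)
    ultimately show "sin (\<delta> + ?S) < 0" by linarith
  qed
  show ?thesis using nn lt sg theta by auto
qed

end
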